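(* Let $a,b,c,d$ be positive integers with $d<b\le c$ and $b\equiv c\pmod 2$, and let $s=\tfrac12 b+\tfrac12 c$. Then $$K_3:=\frac{s^{2s^2}}{b^{b^2}c^{c^2}}\cdot\frac{(a+s-d)^{2(a+s-d)^2}}{(a+b-d)^{(a+b-d)^2}(a+c-d)^{(a+c-d)^2}}\cdot\frac{(b-d)^{(b-d)^2}(c-d)^{(c-d)^2}}{(s-d)^{2(s-d)^2}}\cdot\frac{(a+b)^{(a+b)^2}(a+c)^{(a+c)^2}}{(a+s)^{2(a+s)^2}}\le 1,$$ with strict inequality unless $b=c$. Moreover, for positive integers $a,d,c$ with $d<c$, $$\frac{a^{a}d^{d}c^{c}(a+c-d)^{a+c-d}}{(a+d)^{a+d}(a+c)^{a+c}(c-d)^{c-d}}<1.$$ *)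

theory Defs
  imports Complex_Main
begin

text \<open>All bases are positive
  integers and all exponents are natural numbers, so we use natural-number powers of reals.\<close>

definition K3 :: "nat \<Rightarrow> nat \<Rightarrow> nat \<Rightarrow> nat \<Rightarrow> real" where
  "K3 a b c d = (let s = (b + c) div 2 in
      (real s ^ (2 * s^2) / (real b ^ (b^2) * real c ^ (c^2)))
    * (real (a+s-d) ^ (2 * (a+s-d)^2)
        / (real (a+b-d) ^ ((a+b-d)^2) * real (a+c-d) ^ ((a+c-d)^2)))
    * ((real (b-d) ^ ((b-d)^2) * real (c-d) ^ ((c-d)^2)) / real (s-d) ^ (2 * (s-d)^2))
    * ((real (a+b) ^ ((a+b)^2) * real (a+c) ^ ((a+c)^2)) / real (a+s) ^ (2 * (a+s)^2)))"

end

theory Submission imports Defs begin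

definition FF :: "real \<Rightarrow> real" where "FF x = x^2 * ln x"
definition F1 :: "real \<Rightarrow> real" where "F1 x = 2*x*ln x + x"
definition DD :: "real \<Rightarrow> real \<Rightarrow> real \<Rightarrow> real" where
  "DD B C t = FF (t+B) + FF (t+C) - 2 * FF (t+(B+C)/2)"
definition D1 :: "real \<Rightarrow> real \<Rightarrow> real \<Rightarrow> real" where
  "D1 B C t = F1 (t+B) + F1 (t+C) - 2 * F1 (t+(B+C)/2)"

lemma FF_deriv: "x > 0 \<Longrightarrow> (FF has_real_derivative F1 x) (at x)"
  unfolding FF_def F1_def
  by (auto intro!: derivative_eq_intros simp: field_simps power2_eq_square)

lemma F1_deriv: "x > 0 \<Longrightarrow> (F1 has_real_derivative (2 * ln x + 3)) (at x)"
  unfolding F1_def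
  by (auto intro!: derivative_eq_intros simp: field_simps)

lemma DD_deriv:
  assumes "t + B > 0" "t + C > 0"
  shows "(DD B C has_real_derivative D1 B C t) (at t)"
proof -
  have m: "t + (B+C)/2 > 0" using assms by (simp add: field_simps)
  have "((\<lambda>t. FF (t+B) + FF (t+C) - 2 * FF (t+(B+C)/2)) has_real_derivative
     (F1 (t+B) + F1 (t+C) - 2 * F1 (t+(B+C)/2))) (at t)"
    using FF_deriv[OF assms(1), unfolded DERIV_shift] FF_deriv[OF assms(2), unfolded DERIV_shift]
      FF_deriv[OF m, unfolded DERIV_shift]
    by (intro DERIV_diff DERIV_add DERIV_cmult) auto
  then show ?thesis unfolding DD_def[abs_def] D1_def by simp
qed

lemma D1_deriv:
  assumes "t + B > 0" "t + C > 0"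
  shows "(D1 B C has_real_derivative (2*ln (t+B) + 2*ln(t+C) - 4*ln (t+(B+C)/2))) (at t)"
proof -
  have m: "t + (B+C)/2 > 0" using assms by (simp add: field_simps)
  have "((\<lambda>t. F1 (t+B) + F1 (t+C) - 2 * F1 (t+(B+C)/2)) has_real_derivative
     ((2*ln (t+B) + 3) + (2*ln (t+C)+3) - 2 * (2*ln (t+(B+C)/2)+3))) (at t)"
    using F1_deriv[OF assms(1), unfolded DERIV_shift] F1_deriv[OF assms(2), unfolded DERIV_shift]
      F1_deriv[OF m, unfolded DERIV_shift]
    by (intro DERIV_diff DERIV_add DERIV_cmult) auto
  then show ?thesis unfolding D1_def[abs_def] by (simp add: algebra_simps)
qed

lemma D2_neg:
  fixes t B C :: real
  assumes "t + B > 0" "t + C > 0" "B \<noteq> C"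
  shows "2*ln (t+B) + 2*ln(t+C) - 4*ln (t+(B+C)/2) < 0"
proof -
  have m: "t + (B+C)/2 > 0" using assms by (simp add: field_simps)
  have "(t+B)*(t+C) < (t+(B+C)/2)^2"
  proof -
    have "(t+(B+C)/2)^2 - (t+B)*(t+C) = ((B-C)/2)^2" by (simp add: power2_eq_square field_simps)
    moreover have "((B-C)/2)^2 > 0" using assms(3) by simp
    ultimately show ?thesis by linarith
  qed
  hence "ln ((t+B)*(t+C)) < ln ((t+(B+C)/2)^2)"
    using assms m by (intro ln_less_cancel_iff[THEN iffD2]) (auto intro: mult_pos_pos)
  thus ?thesis using assms m by (simp add: ln_mult ln_realpow)
qed

lemma D1_decr:
  assumes "-B < u" "u < v" "B \<le> C" "B \<noteq> C"
  shows "D1 B C v < D1 B C u"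
  using assms(2)
proof (rule DERIV_neg_imp_decreasing)
  fix x assume "u \<le> x" "x \<le> v"
  hence "x + B > 0" "x + C > 0" using assms by linarith+
  thus "\<exists>y. DERIV (D1 B C) x :> y \<and> y < 0"
    using D1_deriv D2_neg assms(4) by blast
qed

lemma Phi_decr:
  assumes "0 < d" "d < B" "0 < a" "B \<le> C" "B \<noteq> C"
  shows "DD B C a - DD B C (a - d) < DD B C 0 - DD B C (0 - d)"
proof -
  have "(\<lambda>t. DD B C t - DD B C (t - d)) a < (\<lambda>t. DD B C t - DD B C (t - d)) 0"
    using assms(3)
  proof (rule DERIV_neg_imp_decreasing)
    fix x :: real assume x: "0 \<le> x" "x \<le> a"
    have p: "x + B > 0" "x + C > 0" "(x - d) + B > 0" "(x - d) + C > 0" using assms x by linarith+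
    have d2: "((\<lambda>t. DD B C (t - d)) has_real_derivative D1 B C (x - d)) (at x)"
      using DD_deriv[OF p(3,4)] DERIV_shift[of "DD B C" _ "x" "-d"] by simp
    have "((\<lambda>t. DD B C t - DD B C (t - d)) has_real_derivative D1 B C x - D1 B C (x - d)) (at x)"
      by (intro derivative_intros DD_deriv[OF p(1,2)] d2)
    moreover have "D1 B C x < D1 B C (x - d)"
      using D1_decr[of B "x - d" x C] assms x by linarith
    ultimately show "\<exists>y. DERIV (\<lambda>t. DD B C t - DD B C (t - d)) x :> y \<and> y < 0"
      by (intro exI[of _ "D1 B C x - D1 B C (x - d)"]) simp
  qed
  thus ?thesis by simp
qed

lemma L1: "ln (real n ^ (n^2)) = FF (real n)" by (simp add: FF_def ln_realpow)
lemma L2: "ln (real n ^ (2*n^2)) = 2 * FF (real n)" by (simp add: FF_def ln_realpow)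

lemma ln_K:
  fixes X1 X2 X3 X4 X5 X6 X7 X8 X9 X10 X11 X12 :: real
  assumes "X1>0" "X2>0" "X3>0" "X4>0" "X5>0" "X6>0" "X7>0" "X8>0" "X9>0" "X10>0" "X11>0" "X12>0"
  shows "ln ((X1/(X2*X3)) * (X4/(X5*X6)) * ((X7*X8)/X9) * ((X10*X11)/X12))
    = ln X1 - ln X2 - ln X3 + ln X4 - ln X5 - ln X6 + ln X7 + ln X8 - ln X9 + ln X10 + ln X11 - ln X12"
  using assms by (simp add: ln_mult ln_div)

lemma part1:
  fixes a b c d :: nat
  assumes "0 < a" "0 < d" "d < b" "b \<le> c" "even (b + c)"
  shows "K3 a b c d \<le> 1 \<and> (b \<noteq> c \<longrightarrow> K3 a b c d < 1)"
proof (cases "b = c")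
  case True
  have "K3 a b c d = 1" using True assms by (simp add: K3_def mult_2 power_add)
  thus ?thesis using True by simp
next
  case False
  define s where "s = (b + c) div 2"
  have bc: "b + c = 2 * s" using assms(5) unfolding s_def by simp
  have sb: "b \<le> s" "s \<le> c" using bc assms(4) by linarith+
  have rs: "real s = (real b + real c)/2" using bc by (simp add: field_simps flip: of_nat_add of_nat_mult) 
  define B where "B = real b"
  define C where "C = real c"
  have pos: "0 < K3 a b c d" using assms sb unfolding K3_def Let_def s_def[symmetric] by simp
  have "ln (K3 a b c d) = DD B C (real a) - DD B C (real a - real d) - (DD B C 0 - DD B C (0 - real d))"
  proof -
    have "ln (K3 a b c d) = 2 * FF (real s) - FF (real b) - FF (real c)
       + 2 * FF (real (a+s-d)) - FF (real (a+b-d)) - FF (real (a+c-d))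
       + FF (real (b-d)) + FF (real (c-d)) - 2 * FF (real (s-d))
       + FF (real (a+b)) + FF (real (a+c)) - 2 * FF (real (a+s))"
      unfolding K3_def Let_def s_def[symmetric]
      apply (subst ln_K)
      apply (simp_all only: L1 L2)
      using assms sb by simp_all
    also have "\<dots> = DD B C (real a) - DD B C (real a - real d) - (DD B C 0 - DD B C (0 - real d))"
      using assms sb unfolding DD_def B_def C_def
      by (simp add: of_nat_diff rs algebra_simps)
    finally show ?thesis .
  qed
  also have "\<dots> < 0"
    using Phi_decr[of "real d" B "real a" C] assms False unfolding B_def C_def by simp
  finally have "ln (K3 a b c d) < 0" .
  hence "K3 a b c d < 1" using pos by (simp add: ln_less_zero_iff)
  thus ?thesis by simp
qed

lemma xlnx_deriv: "(x::real) > 0 \<Longrightarrow> ((\<lambda>x. x * ln x) has_real_derivative (ln x + 1)) (at x)"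
  by (auto intro!: derivative_eq_intros)

lemma G_mono:
  fixes a u v :: real
  assumes "0 < a" "0 < u" "u < v"
  shows "(u+a)*ln(u+a) - u*ln u < (v+a)*ln(v+a) - v*ln v"
proof -
  have "(\<lambda>x. (x+a)*ln(x+a) - x*ln x) u < (\<lambda>x. (x+a)*ln(x+a) - x*ln x) v"
    using assms(3)
  proof (rule DERIV_pos_imp_increasing)
    fix x assume x: "u \<le> x" "x \<le> v"
    hence xp: "x > 0" using assms by linarith
    have "((\<lambda>x. (x+a)*ln(x+a) - x*ln x) has_real_derivative (ln(x+a) - ln x)) (at x)"
    proof -
      have xa: "x + a > 0" using xp assms by auto
      have h1: "((\<lambda>x. (x+a)*ln(x+a)) has_real_derivative (ln (x+a) + 1)) (at x)"
        using xlnx_deriv[OF xa] DERIV_shift[of "\<lambda>x. x * ln x" _ x a] by simp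
      show ?thesis using DERIV_diff[OF h1 xlnx_deriv[OF xp]] by simp
    qed
    moreover have "ln(x+a) - ln x > 0" using xp assms by simp
    ultimately show "\<exists>y. DERIV (\<lambda>x. (x+a)*ln(x+a) - x*ln x) x :> y \<and> 0 < y" by blast
  qed
  thus ?thesis by simp
qed

lemma part2:
  fixes a d c :: nat
  assumes "0 < a" "0 < d" "d < c"
  shows "(real a ^ a * real d ^ d * real c ^ c * real (a+c-d) ^ (a+c-d))
            / (real (a+d) ^ (a+d) * real (a+c) ^ (a+c) * real (c-d) ^ (c-d)) < 1"
proof -
  have A: "real a ^ a * real d ^ d < real (a+d) ^ (a+d)"
  proof -
    have "real a ^ a < real (a+d) ^ a" using assms by (intro power_strict_mono) auto
    moreover have "real d ^ d \<le> real (a+d) ^ d" by (intro power_mono) auto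
    ultimately have "real a ^ a * real d ^ d < real (a+d) ^ a * real (a+d) ^ d"
      using assms by (intro mult_less_le_imp_less) auto
    thus ?thesis by (simp add: power_add)
  qed
  have Bi: "real c ^ c * real (a+c-d) ^ (a+c-d) \<le> real (a+c) ^ (a+c) * real (c-d) ^ (c-d)"
  proof -
    have g: "(real (c-d) + a)*ln(real (c-d) + a) - real (c-d)*ln (real (c-d))
       < (real c+a)*ln(real c+a) - real c*ln (real c)"
      using assms by (intro G_mono) (auto simp: of_nat_diff)
    have "ln (real c ^ c * real (a+c-d) ^ (a+c-d)) \<le> ln (real (a+c) ^ (a+c) * real (c-d) ^ (c-d))"
      using assms g by (simp add: ln_mult ln_realpow of_nat_diff algebra_simps)
    thus ?thesis using assms by (subst (asm) ln_le_cancel_iff) auto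
  qed
  have "real a ^ a * real d ^ d * (real c ^ c * real (a+c-d) ^ (a+c-d))
      < real (a+d) ^ (a+d) * (real (a+c) ^ (a+c) * real (c-d) ^ (c-d))"
    using A Bi assms by (intro mult_less_le_imp_less) auto
  moreover have "0 < real (a+d) ^ (a+d) * real (a+c) ^ (a+c) * real (c-d) ^ (c-d)" using assms by simp
  ultimately show ?thesis by (simp add: divide_less_eq mult.assoc)
qed

theorem mainTheorem8:
  shows "(\<forall>a b c d :: nat. 0 < a \<longrightarrow> 0 < d \<longrightarrow> d < b \<longrightarrow> b \<le> c \<longrightarrow> even (b + c) \<longrightarrow>
            K3 a b c d \<le> 1 \<and> (b \<noteq> c \<longrightarrow> K3 a b c d < 1))
       \<and> (\<forall>a d c :: nat. 0 < a \<longrightarrow> 0 < d \<longrightarrow> d < c \<longrightarrow>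
            (real a ^ a * real d ^ d * real c ^ c * real (a+c-d) ^ (a+c-d))
            / (real (a+d) ^ (a+d) * real (a+c) ^ (a+c) * real (c-d) ^ (c-d)) < 1)"
  using part1 part2 by blast

end
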